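(* There is a normal infinite word $x=a_1a_2a_3\cdots$ over the alphabet $\{0,1\}$ such that $x=\mathrm{even}(x)$, i.e. $a_{2n}=a_n$ for every $n\ge1$.
   Context: For $x=a_1a_2a_3\cdots$, $\mathrm{even}(x)=a_2a_4a_6\cdots$. For words $w,u$, $|w|^{al}_u=|\{i: w[i..i+|u|-1]=u,\ i\equiv1\bmod|u|\}|$ (positions start at 1). An infinite word $x$ over $A$ is normal if for every $\ell\ge1$ and every $u\in A^\ell$, $\lim_{n\to\infty}|x[1..n]|^{al}_u/(n/\ell)=|A|^{-\ell}$. *)

theory Defs
  imports Complex_Main
begin

text \<open>Infinite words are functions nat => 'a; position i (1-based in the paper)
  is stored at index i - 1, i.e. x 0 = a_1.\<close>

definition factor :: "(nat \<Rightarrow> 'a) \<Rightarrow> nat \<Rightarrow> nat \<Rightarrow> 'a list" where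
  "factor x i l = map (\<lambda>j. x (j - 1)) [i..<i + l]"

definition aligned_count :: "(nat \<Rightarrow> 'a) \<Rightarrow> nat \<Rightarrow> 'a list \<Rightarrow> nat" where
  "aligned_count x n u =
     card {i. 1 \<le> i \<and> i + length u - 1 \<le> n \<and> i mod length u = 1 mod length u
              \<and> factor x i (length u) = u}"

definition normal_word :: "'a set \<Rightarrow> (nat \<Rightarrow> 'a) \<Rightarrow> bool" where
  "normal_word A x \<longleftrightarrow> range x \<subseteq> A \<and>
     (\<forall>l\<ge>1. \<forall>u. length u = l \<and> set u \<subseteq> A \<longrightarrow>
        (\<lambda>n. real (aligned_count x n u) / (real n / real l))
          \<longlonglongrightarrow> 1 / real (card A) ^ l)"

text \<open>even(x) = a_2 a_4 a_6 ...; with 0-based storage, (even x) k = x (2k+1).\<close>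
definition even_word :: "(nat \<Rightarrow> 'a) \<Rightarrow> nat \<Rightarrow> 'a" where
  "even_word x k = x (2 * k + 1)"

end

theory Submission
  imports Defs "HOL-Library.FuncSet"
begin
function hh :: "nat \<Rightarrow> nat" where
  "hh p = (if p = 0 \<or> odd p then (p - 1) div 2 else hh (p div 2))"
  by auto
termination by (relation "measure id") auto

declare hh.simps[simp del]

lemma hh_odd: "odd p \<Longrightarrow> hh p = (p - 1) div 2"
  by (subst hh.simps) auto

lemma hh_even: "p > 0 \<Longrightarrow> even p \<Longrightarrow> hh p = hh (p div 2)"
  by (subst hh.simps) auto

lemma hh_double: "p > 0 \<Longrightarrow> hh (2 * p) = hh p"
  using hh_even[of "2*p"] by simp

lemma hh_lt: "2^k \<le> p \<Longrightarrow> p < 2^(Suc k) \<Longrightarrow> hh p < 2^k"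
proof (induction k arbitrary: p)
  case 0
  then have "p = 1" by simp
  then show ?case by (simp add: hh_odd)
next
  case (Suc k)
  show ?case
  proof (cases "odd p")
    case True
    then show ?thesis using Suc.prems by (simp add: hh_odd)
  next
    case False
    have "p > 0" using Suc.prems by (metis le_0_eq not_gr0 power_not_zero zero_neq_numeral)
    then have "hh p = hh (p div 2)" using False hh_even by auto
    moreover have "2^k \<le> p div 2" "p div 2 < 2^Suc k" using Suc.prems False by auto
    ultimately show ?thesis using Suc.IH[of "p div 2"] by simp
  qed
qed

lemma hh_inj: "2^k \<le> p \<Longrightarrow> p < 2^(Suc k) \<Longrightarrow> 2^k \<le> q \<Longrightarrow> q < 2^(Suc k) \<Longrightarrow> hh p = hh q \<Longrightarrow> p = q"
proof (induction k arbitrary: p q)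
  case 0
  then show ?case by simp
next
  case (Suc k)
  have p0: "p > 0" "q > 0" using Suc.prems by (auto intro: gr0I)
  have big: "2^k \<le> hh r" if "odd r" "2^Suc k \<le> r" for r
  proof -
    have "2^Suc k \<noteq> r" using that by auto
    then have "2^Suc k + 1 \<le> r" using that by simp
    then show ?thesis using that by (simp add: hh_odd)
  qed
  have small: "hh r < 2^k" if "even r" "2^Suc k \<le> r" "r < 2^Suc (Suc k)" for r
  proof -
    have "r > 0" using that(2) by (auto intro: gr0I)
    then have "hh r = hh (r div 2)" using that hh_even by auto
    moreover have "2^k \<le> r div 2" "r div 2 < 2^Suc k" using that by auto
    ultimately show ?thesis using hh_lt by simp
  qed
  show ?case
  proof (cases "odd p")
    case True
    show ?thesis
    proof (cases "odd q")
      case True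
      with \<open>odd p\<close> Suc.prems show ?thesis by (auto simp: hh_odd elim!: oddE)
    next
      case False
      then show ?thesis using big[of p] small[of q] Suc.prems \<open>odd p\<close> by simp
    qed
  next
    case False
    show ?thesis
    proof (cases "odd q")
      case True
      then show ?thesis using big[of q] small[of p] Suc.prems False by simp
    next
      case qe: False
      have "hh (p div 2) = hh (q div 2)" using Suc.prems False qe p0 hh_even by metis
      moreover have "2^k \<le> p div 2" "p div 2 < 2^Suc k" "2^k \<le> q div 2" "q div 2 < 2^Suc k"
        using Suc.prems by auto
      ultimately have "p div 2 = q div 2" using Suc.IH by blast
      then show ?thesis using False qe by (metis dvd_mult_div_cancel)
    qed
  qed
qed

lemma fix_count:
  assumes "finite I" "inj_on g {..<s}" "g ` {..<s} \<subseteq> I" "\<forall>q<s. w q \<in> {0,1::nat}"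
  shows "card {f \<in> PiE I (\<lambda>_. {0,1::nat}). \<forall>q<s. f (g q) = w q} = 2^(card I - s)"
proof -
  define G where "G = g ` {..<s}"
  have eq: "{f \<in> PiE I (\<lambda>_. {0,1::nat}). \<forall>q<s. f (g q) = w q}
      = PiE I (\<lambda>i. if i \<in> G then {w (the_inv_into {..<s} g i)} else {0,1})"
  proof (intro equalityI subsetI)
    fix f assume f: "f \<in> {f \<in> PiE I (\<lambda>_. {0,1::nat}). \<forall>q<s. f (g q) = w q}"
    show "f \<in> PiE I (\<lambda>i. if i \<in> G then {w (the_inv_into {..<s} g i)} else {0,1})"
    proof (rule PiE_I)
      fix i assume "i \<in> I"
      show "f i \<in> (if i \<in> G then {w (the_inv_into {..<s} g i)} else {0,1})"
      proof (cases "i \<in> G")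
        case True
        then obtain q where q: "q < s" "i = g q" unfolding G_def by auto
        then show ?thesis using True f the_inv_into_f_f[OF assms(2), of q] by auto
      next
        case False
        then show ?thesis using f \<open>i \<in> I\<close> by (auto simp: PiE_def Pi_def)
      qed
    next
      fix i assume "i \<notin> I" then show "f i = undefined" using f by (auto simp: PiE_def extensional_def)
    qed
  next
    fix f assume f: "f \<in> PiE I (\<lambda>i. if i \<in> G then {w (the_inv_into {..<s} g i)} else {0,1})"
    have "f \<in> PiE I (\<lambda>_. {0,1::nat})"
    proof (rule PiE_I)
      fix i assume i: "i \<in> I"
      show "f i \<in> {0,1}"
      proof (cases "i \<in> G")
        case True
        then obtain q where q: "q < s" "i = g q" unfolding G_def by auto
        then have "f i = w q" using f i True the_inv_into_f_f[OF assms(2), of q] by (auto simp: PiE_def Pi_def)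
        then show ?thesis using assms(4) q by auto
      next
        case False then show ?thesis using f i by (auto simp: PiE_def Pi_def)
      qed
    next
      fix i assume "i \<notin> I" then show "f i = undefined" using f by (auto simp: PiE_def extensional_def)
    qed
    moreover have "\<forall>q<s. f (g q) = w q"
    proof (intro allI impI)
      fix q assume q: "q < s"
      then have "g q \<in> G" "g q \<in> I" using assms(3) unfolding G_def by auto
      then show "f (g q) = w q" using f the_inv_into_f_f[OF assms(2), of q] q by (auto simp: PiE_def Pi_def)
    qed
    ultimately show "f \<in> {f \<in> PiE I (\<lambda>_. {0,1::nat}). \<forall>q<s. f (g q) = w q}" by blast
  qed
  have "card (PiE I (\<lambda>i. if i \<in> G then {w (the_inv_into {..<s} g i)} else {0,1::nat}))
      = (\<Prod>i\<in>I. if i \<in> G then 1 else 2)"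
    by (simp add: card_PiE[OF assms(1)] if_distrib, intro prod.cong) auto
  also have "\<dots> = 2 ^ card (I - G)"
    using assms(1) by (simp add: prod.If_cases Diff_eq)
  also have "card (I - G) = card I - s"
    using assms(1,3) card_image[OF assms(2)] unfolding G_def by (simp add: card_Diff_subset finite_subset)
  finally show ?thesis using eq by simp
qed

lemma cheb:
  fixes \<Omega> :: "'a set" and J :: "'b set" and E :: "'b \<Rightarrow> 'a set" and p t :: real
  assumes fin: "finite \<Omega>" "finite J" and sub: "\<And>j. j\<in>J \<Longrightarrow> E j \<subseteq> \<Omega>"
    and c1: "\<And>j. j \<in> J \<Longrightarrow> real (card (E j)) = p * card \<Omega>"
    and c2: "\<And>j j'. j \<in> J \<Longrightarrow> j' \<in> J \<Longrightarrow> j \<noteq> j' \<Longrightarrow> real (card (E j \<inter> E j')) = p^2 * card \<Omega>"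
    and p: "0 \<le> p" "p \<le> 1" and t: "t > 0"
  shows "real (card {\<omega> \<in> \<Omega>. t \<le> \<bar>real (card {j\<in>J. \<omega> \<in> E j}) - real (card J) * p\<bar>}) * t^2
          \<le> real (card J) * card \<Omega>"
proof -
  define m where "m = real (card J)"
  define N where "N \<omega> = (\<Sum>j\<in>J. of_bool (\<omega> \<in> E j) :: real)" for \<omega>
  have Nc: "real (card {j\<in>J. \<omega> \<in> E j}) = N \<omega>" for \<omega>
    unfolding N_def using fin(2) by (simp add: Int_def conj_commute)
  have cardE: "real (card (\<Omega> \<inter> {\<omega>. \<omega> \<in> S})) = real (card S)" if "S \<subseteq> \<Omega>" for S
    proof - have "\<Omega> \<inter> {\<omega>. \<omega> \<in> S} = S" using that by auto then show ?thesis by simp qed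
  have S1: "(\<Sum>\<omega>\<in>\<Omega>. N \<omega>) = m * p * card \<Omega>"
  proof -
    have "(\<Sum>\<omega>\<in>\<Omega>. N \<omega>) = (\<Sum>j\<in>J. \<Sum>\<omega>\<in>\<Omega>. of_bool (\<omega> \<in> E j))"
      unfolding N_def by (rule sum.swap)
    also have "\<dots> = (\<Sum>j\<in>J. p * card \<Omega>)"
    proof (rule sum.cong[OF refl])
      fix j assume "j \<in> J"
      then show "(\<Sum>\<omega>\<in>\<Omega>. of_bool (\<omega> \<in> E j) :: real) = p * card \<Omega>"
        using fin(1) cardE[OF sub] c1 by simp
    qed
    finally show ?thesis unfolding m_def by simp
  qed
  have S2: "(\<Sum>\<omega>\<in>\<Omega>. N \<omega> ^ 2) = m * p * card \<Omega> + m * (m - 1) * p^2 * card \<Omega>"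
  proof -
    have sq: "N \<omega> ^ 2 = (\<Sum>j\<in>J. \<Sum>j'\<in>J. of_bool (\<omega> \<in> E j \<inter> E j'))" for \<omega>
      unfolding N_def power2_eq_square sum_product by (simp add: of_bool_conj)
    have "(\<Sum>\<omega>\<in>\<Omega>. N \<omega> ^ 2) = (\<Sum>j\<in>J. \<Sum>j'\<in>J. \<Sum>\<omega>\<in>\<Omega>. of_bool (\<omega> \<in> E j \<inter> E j'))"
      unfolding sq by (simp add: sum.swap[of _ \<Omega>] sum.swap[of _ \<Omega> J])
    also have "\<dots> = (\<Sum>j\<in>J. p * card \<Omega> + (m - 1) * (p^2 * card \<Omega>))"
    proof (rule sum.cong[OF refl])
      fix j assume j: "j \<in> J"
      have "(\<Sum>j'\<in>J. \<Sum>\<omega>\<in>\<Omega>. of_bool (\<omega> \<in> E j \<inter> E j') :: real)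
         = (\<Sum>\<omega>\<in>\<Omega>. of_bool (\<omega> \<in> E j \<inter> E j)) + (\<Sum>j'\<in>J - {j}. \<Sum>\<omega>\<in>\<Omega>. of_bool (\<omega> \<in> E j \<inter> E j'))"
        using j fin(2) by (simp add: sum.remove)
      also have "(\<Sum>\<omega>\<in>\<Omega>. of_bool (\<omega> \<in> E j \<inter> E j) :: real) = p * card \<Omega>"
        using fin(1) cardE[OF sub[OF j]] c1[OF j] by simp
      also have "(\<Sum>j'\<in>J - {j}. \<Sum>\<omega>\<in>\<Omega>. of_bool (\<omega> \<in> E j \<inter> E j') :: real)
          = (\<Sum>j'\<in>J - {j}. p^2 * card \<Omega>)"
      proof (rule sum.cong[OF refl])
        fix j' assume j': "j' \<in> J - {j}"
        have "E j \<inter> E j' \<subseteq> \<Omega>" using sub j by auto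
        then show "(\<Sum>\<omega>\<in>\<Omega>. of_bool (\<omega> \<in> E j \<inter> E j') :: real) = p^2 * card \<Omega>"
        proof -
          have e: "\<Omega> \<inter> {\<omega> \<in> E j. \<omega> \<in> E j'} = E j \<inter> E j'" using \<open>E j \<inter> E j' \<subseteq> \<Omega>\<close> by auto
          have "(\<Sum>\<omega>\<in>\<Omega>. of_bool (\<omega> \<in> E j \<inter> E j') :: real) = real (card (\<Omega> \<inter> {\<omega>. \<omega> \<in> E j \<inter> E j'}))"
            using fin(1) sum_of_bool_eq[of \<Omega> "\<lambda>\<omega>. \<omega> \<in> E j \<inter> E j'", where 'a=real] by blast
          also have "\<Omega> \<inter> {\<omega>. \<omega> \<in> E j \<inter> E j'} = E j \<inter> E j'" using e by auto
          finally show ?thesis using c2[of j j'] j j' by (simp only:) auto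
        qed
      qed
      also have "\<dots> = (m - 1) * (p^2 * card \<Omega>)"
      proof -
        have cJ: "card J \<ge> 1" using j fin(2) by (metis One_nat_def Suc_leI card_gt_0_iff empty_iff)
        show ?thesis using j fin(2) cJ unfolding m_def by (simp add: card_Diff_singleton of_nat_diff)
      qed
      finally show "(\<Sum>j'\<in>J. \<Sum>\<omega>\<in>\<Omega>. of_bool (\<omega> \<in> E j \<inter> E j') :: real) = p * card \<Omega> + (m - 1) * (p^2 * card \<Omega>)" .
    qed
    finally show ?thesis unfolding m_def by (simp add: algebra_simps)
  qed
  have V: "(\<Sum>\<omega>\<in>\<Omega>. (N \<omega> - m * p)^2) = m * p * (1 - p) * card \<Omega>"
  proof -
    have "(\<Sum>\<omega>\<in>\<Omega>. (N \<omega> - m * p)^2) = (\<Sum>\<omega>\<in>\<Omega>. N \<omega> ^ 2) - 2 * m * p * (\<Sum>\<omega>\<in>\<Omega>. N \<omega>) + (m*p)^2 * card \<Omega>"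
      by (simp add: power2_diff sum.distrib sum_subtractf sum_distrib_left sum_distrib_right algebra_simps)
    then show ?thesis using S1 S2 by (simp add: algebra_simps power2_eq_square)
  qed
  define Bad where "Bad = {\<omega> \<in> \<Omega>. t \<le> \<bar>real (card {j\<in>J. \<omega> \<in> E j}) - m * p\<bar>}"
  have "real (card Bad) * t^2 = (\<Sum>\<omega>\<in>Bad. t^2)" by simp
  also have "\<dots> \<le> (\<Sum>\<omega>\<in>Bad. (N \<omega> - m * p)^2)"
  proof (rule sum_mono)
    fix \<omega> assume "\<omega> \<in> Bad"
    then have "t \<le> \<bar>N \<omega> - m * p\<bar>" unfolding Bad_def Nc by simp
    then show "t^2 \<le> (N \<omega> - m * p)^2" using t
      by (metis abs_ge_zero abs_le_square_iff less_imp_le power2_abs abs_of_nonneg order_trans)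
  qed
  also have "\<dots> \<le> (\<Sum>\<omega>\<in>\<Omega>. (N \<omega> - m * p)^2)"
    by (rule sum_mono2[OF fin(1)]) (auto simp: Bad_def)
  also have "\<dots> \<le> m * card \<Omega>" unfolding V
  proof -
    have "p * (1 - p) \<le> 1" using p by (simp add: mult_le_one)
    moreover have "m * card \<Omega> \<ge> 0" unfolding m_def by simp
    ultimately have "(m * card \<Omega>) * (p * (1 - p)) \<le> (m * card \<Omega>) * 1"
      by (intro mult_left_mono) auto
    then show "m * p * (1 - p) * card \<Omega> \<le> m * card \<Omega>" by (simp add: algebra_simps)
  qed
  finally show ?thesis unfolding Bad_def m_def .
qed

definition Om :: "nat \<Rightarrow> (nat \<Rightarrow> nat) set" where "Om K = PiE {..<2^K} (\<lambda>_. {0,1})"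
definition Ev :: "(nat \<Rightarrow> nat) \<Rightarrow> nat list \<Rightarrow> nat \<Rightarrow> bool" where
  "Ev b u i \<longleftrightarrow> (\<forall>q<length u. b (hh (i+q)) = u!q)"
definition slots :: "nat \<Rightarrow> nat \<Rightarrow> nat \<Rightarrow> nat set" where
  "slots k l c = {i. 2^k \<le> i \<and> i + l \<le> c \<and> i mod l = 1 mod l}"
definition cnt :: "(nat \<Rightarrow> nat) \<Rightarrow> nat list \<Rightarrow> nat \<Rightarrow> nat \<Rightarrow> nat" where
  "cnt b u k c = card {i \<in> slots k (length u) c. Ev b u i}"
definition words :: "nat \<Rightarrow> nat list set" where
  "words l = {u. set u \<subseteq> {0,1::nat} \<and> length u = l}"

lemma finite_slots: "finite (slots k l c)"
  by (rule finite_subset[of _ "{..c}"]) (auto simp: slots_def)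

lemma slots_sep: "i \<in> slots k l c \<Longrightarrow> i' \<in> slots k l c \<Longrightarrow> i < i' \<Longrightarrow> i + l \<le> i'"
proof -
  assume a: "i \<in> slots k l c" "i' \<in> slots k l c" "i < i'"
  then have "i' mod l = i mod l" by (simp add: slots_def)
  then have "l dvd i' - i" using a(3) by (simp add: mod_eq_dvd_iff_nat)
  then show ?thesis using a(3) by (metis add_diff_inverse_nat dvd_imp_le le_add_diff_inverse less_imp_le_nat not_less zero_less_diff add_le_cancel_left nat_le_linear)
qed

lemma card_Om: "card (Om K) = 2^(2^K)"
  unfolding Om_def by (simp add: card_PiE) (metis numeral_2_eq_2)

lemma finite_Om: "finite (Om K)"
  by (simp add: Om_def finite_PiE)

lemma fix_count_real:
  assumes "finite I" "inj_on g {..<s}" "g ` {..<s} \<subseteq> I" "\<forall>q<s. w q \<in> {0,1::nat}"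
  shows "real (card {f \<in> PiE I (\<lambda>_. {0,1::nat}). \<forall>q<s. f (g q) = w q}) = (1/2)^s * 2^(card I)"
proof -
  have "s \<le> card I"
    using card_mono[OF assms(1,3)] card_image[OF assms(2)] by simp
  then have "(2::real)^(card I - s) = (1/2)^s * 2^(card I)"
    by (simp add: power_diff field_simps)
  then show ?thesis using fix_count[OF assms] by simp
qed

lemma level_bound:
  assumes k: "k \<le> K" and l: "l \<ge> 1" and u: "u \<in> words l" and c: "c \<le> 2^(Suc k)" and t: "t > 0"
  shows "real (card {f \<in> Om K. t \<le> \<bar>real (cnt f u k c) - real (card (slots k l c)) / 2^l\<bar>}) * t^2
      \<le> real (card (slots k l c)) * 2^(2^K)"
proof -
  have lu: "length u = l" using u by (simp add: words_def)
  have uv: "\<forall>q<l. u!q \<in> {0,1::nat}"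
  proof (intro allI impI)
    fix q assume "q < l"
    then have "u!q \<in> set u" using lu by simp
    then show "u!q \<in> {0,1::nat}" using u by (auto simp: words_def)
  qed
  define J where "J = slots k l c"
  define E where "E i = {f \<in> Om K. Ev f u i}" for i
  have pos: "2^k \<le> i + q \<and> i + q < 2^Suc k" if "i \<in> J" "q < l" for i q
    using that c unfolding J_def slots_def by auto
  have hlt: "hh (i + q) < 2^K" if "i \<in> J" "q < l" for i q
  proof -
    have "hh (i+q) < 2^k" using hh_lt pos[OF that] by blast
    also have "(2::nat)^k \<le> 2^K" using k by simp
    finally show ?thesis .
  qed
  have c1: "real (card (E i)) = (1/2)^l * card (Om K)" if i: "i \<in> J" for i
  proof -
    have "E i = {f \<in> PiE {..<2^K} (\<lambda>_. {0,1::nat}). \<forall>q<l. f ((\<lambda>q. hh (i+q)) q) = u!q}"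
      unfolding E_def Om_def Ev_def lu by simp
    moreover have "inj_on (\<lambda>q. hh (i+q)) {..<l}"
    proof (rule inj_onI)
      fix a b assume "a \<in> {..<l}" "b \<in> {..<l}" "hh (i+a) = hh (i+b)"
      then have "i + a = i + b" using pos[OF i, of a] pos[OF i, of b] hh_inj[of k "i+a" "i+b"] by auto
      then show "a = b" by simp
    qed
    moreover have "(\<lambda>q. hh (i+q)) ` {..<l} \<subseteq> {..<2^K}" using hlt[OF i] by auto
    ultimately show ?thesis using fix_count_real[of "{..<2^K}" "\<lambda>q. hh (i+q)" l "\<lambda>q. u!q"] uv
      by (simp add: card_Om)
  qed
  have c2: "real (card (E i \<inter> E i')) = ((1/2)^l)^2 * card (Om K)" if i: "i \<in> J" "i' \<in> J" "i \<noteq> i'" for i i'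
  proof -
    define g where "g q = (if q < l then hh (i+q) else hh (i' + (q - l)))" for q
    define w where "w q = (if q < l then u!q else u!(q - l))" for q
    have sep: "i + l \<le> i' \<or> i' + l \<le> i"
      using slots_sep[of i k l c i'] slots_sep[of i' k l c i] i unfolding J_def by linarith
    have "E i \<inter> E i' = {f \<in> PiE {..<2^K} (\<lambda>_. {0,1::nat}). \<forall>q<2*l. f (g q) = w q}"
    proof -
      have "(\<forall>q<2*l. f (g q) = w q) \<longleftrightarrow> (\<forall>q<l. f (hh (i+q)) = u!q) \<and> (\<forall>q<l. f (hh (i'+q)) = u!q)" for f
      proof
        assume h: "\<forall>q<2*l. f (g q) = w q"
        show "(\<forall>q<l. f (hh (i+q)) = u!q) \<and> (\<forall>q<l. f (hh (i'+q)) = u!q)"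
        proof (intro conjI allI impI)
          fix q assume "q < l"
          then show "f (hh (i+q)) = u!q" using h[rule_format, of q] by (simp add: g_def w_def)
        next
          fix q assume "q < l"
          then show "f (hh (i'+q)) = u!q" using h[rule_format, of "q + l"] by (simp add: g_def w_def)
        qed
      next
        assume h: "(\<forall>q<l. f (hh (i+q)) = u!q) \<and> (\<forall>q<l. f (hh (i'+q)) = u!q)"
        show "\<forall>q<2*l. f (g q) = w q"
        proof (intro allI impI)
          fix q assume "q < 2*l"
          show "f (g q) = w q"
          proof (cases "q < l")
            case True then show ?thesis using h by (simp add: g_def w_def)
          next
            case False
            then have "q - l < l" using \<open>q < 2*l\<close> by simp
            then have "f (hh (i' + (q - l))) = u!(q-l)" using h by blast
            then show ?thesis using False by (simp add: g_def w_def)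
          qed
        qed
      qed
      then show ?thesis unfolding E_def Om_def Ev_def lu by auto
    qed
    moreover have "inj_on g {..<2*l}"
    proof (rule inj_onI)
      fix a b assume ab: "a \<in> {..<2*l}" "b \<in> {..<2*l}" "g a = g b"
      show "a = b"
      proof (cases "a < l"; cases "b < l")
        assume "a < l" "b < l"
        then show ?thesis using ab pos[OF i(1)] hh_inj[of k "i+a" "i+b"] by (simp add: g_def)
      next
        assume "a < l" "\<not> b < l"
        then have "i + a = i' + (b - l)" using ab pos[OF i(1), of a] pos[OF i(2), of "b-l"] hh_inj[of k "i+a" "i'+(b-l)"]
          by (simp add: g_def)
        moreover have "b < 2*l" using ab by simp
        ultimately show ?thesis using sep \<open>a < l\<close> \<open>\<not> b < l\<close> by arith
      next
        assume "\<not> a < l" "b < l"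
        then have "i + b = i' + (a - l)" using ab pos[OF i(1), of b] pos[OF i(2), of "a-l"] hh_inj[of k "i+b" "i'+(a-l)"]
          by (simp add: g_def)
        moreover have "a < 2*l" using ab by simp
        ultimately show ?thesis using sep \<open>\<not> a < l\<close> \<open>b < l\<close> by arith
      next
        assume "\<not> a < l" "\<not> b < l"
        then show ?thesis using ab pos[OF i(2), of "a-l"] pos[OF i(2), of "b-l"] hh_inj[of k "i'+(a-l)" "i'+(b-l)"]
          by (simp add: g_def)
      qed
    qed
    moreover have "g ` {..<2*l} \<subseteq> {..<2^K}"
    proof
      fix y assume "y \<in> g ` {..<2*l}"
      then obtain q where q: "q < 2*l" "y = g q" by auto
      show "y \<in> {..<2^K}"
      proof (cases "q < l")
        case True then show ?thesis using q hlt[OF i(1), of q] by (simp add: g_def)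
      next
        case False
        then have "q - l < l" using q by simp
        then have "hh (i' + (q-l)) < 2^K" using hlt[OF i(2)] by blast
        then show ?thesis using q False by (simp add: g_def)
      qed
    qed
    moreover have "\<forall>q<2*l. w q \<in> {0,1}" using uv by (auto simp: w_def)
    ultimately show ?thesis using fix_count_real[of "{..<2^K}" g "2*l" w]
      by (simp add: card_Om power_mult power2_eq_square flip: power_mult_distrib)
  qed
  have ch: "real (card {f \<in> Om K. t \<le> \<bar>real (card {j\<in>J. f \<in> E j}) - real (card J) * (1/2)^l\<bar>}) * t^2
       \<le> real (card J) * card (Om K)"
  proof (rule cheb[OF finite_Om])
    show "finite J" by (simp add: J_def finite_slots)
    show "E j \<subseteq> Om K" for j by (auto simp: E_def)
    show "real (card (E j)) = (1/2)^l * real (card (Om K))" if "j \<in> J" for j using c1[OF that] .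
    show "real (card (E j \<inter> E j')) = ((1/2)^l)^2 * real (card (Om K))" if "j \<in> J" "j' \<in> J" "j \<noteq> j'" for j j'
      using c2[OF that] .
    show "(0::real) \<le> (1/2)^l" by simp
    show "(1/2::real)^l \<le> 1" by (rule power_le_one) auto
    show "t > 0" by (rule t)
  qed
  have eqs: "{f \<in> Om K. t \<le> \<bar>real (card {j\<in>J. f \<in> E j}) - real (card J) * (1/2)^l\<bar>}
     = {f \<in> Om K. t \<le> \<bar>real (cnt f u k c) - real (card (slots k l c)) / 2^l\<bar>}"
  proof (rule Collect_cong)
    fix f
    show "(f \<in> Om K \<and> t \<le> \<bar>real (card {j\<in>J. f \<in> E j}) - real (card J) * (1/2)^l\<bar>) =
          (f \<in> Om K \<and> t \<le> \<bar>real (cnt f u k c) - real (card (slots k l c)) / 2^l\<bar>)"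
    proof (cases "f \<in> Om K")
      case True
      then have "{j\<in>J. f \<in> E j} = {i \<in> slots k (length u) c. Ev f u i}"
        unfolding E_def J_def lu by auto
      then have "card {j\<in>J. f \<in> E j} = cnt f u k c" unfolding cnt_def by simp
      moreover have "real (card J) * (1/2)^l = real (card (slots k l c)) / 2^l"
        unfolding J_def by (simp add: power_one_over)
      ultimately show ?thesis by simp
    qed simp
  qed
  have "real (card (Om K)) = 2^(2^K)" unfolding card_Om by simp
  then show ?thesis using ch[unfolded eqs] unfolding J_def by simp
qed

definition rr :: "nat \<Rightarrow> nat" where "rr k = k div 16 - 8"
definition cp :: "nat \<Rightarrow> nat \<Rightarrow> nat" where "cp k j = 2^k + j * 2^(k - rr k)"
definition good :: "nat \<Rightarrow> (nat \<Rightarrow> nat) \<Rightarrow> bool" where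
  "good k b \<longleftrightarrow> (\<forall>l\<in>{1..rr k}. \<forall>u\<in>words l. \<forall>j\<le>2^(rr k).
     \<bar>real (cnt b u k (cp k j)) - real (card (slots k l (cp k j))) / 2^l\<bar> < 2^(k - rr k))"

lemma rr_le: "rr k \<le> k" by (simp add: rr_def)

lemma cp_le: "j \<le> 2^(rr k) \<Longrightarrow> cp k j \<le> 2^(Suc k)"
proof -
  assume j: "j \<le> 2^(rr k)"
  have "j * 2^(k - rr k) \<le> 2^(rr k) * 2^(k - rr k)" using j by simp
  also have "\<dots> = 2^k" using rr_le[of k] by (simp flip: power_add)
  finally show ?thesis by (simp add: cp_def)
qed

lemma card_slots_le: "c \<le> 2^(Suc k) \<Longrightarrow> l \<ge> 1 \<Longrightarrow> card (slots k l c) \<le> 2^k"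
proof -
  assume c: "c \<le> 2^(Suc k)" and l: "l \<ge> 1"
  have "slots k l c \<subseteq> {2^k..<2^(Suc k)}" using c l by (auto simp: slots_def)
  then have "card (slots k l c) \<le> card {2^k..<2^(Suc k)::nat}" by (rule card_mono[rotated]) simp
  then show ?thesis by simp
qed

lemma card_words: "card (words l) = 2^l"
  unfolding words_def using card_lists_length_eq[of "{0,1::nat}" l] by (simp add: numeral_2_eq_2)

lemma finite_words: "finite (words l)"
  unfolding words_def using finite_lists_length_eq[of "{0,1::nat}" l] by simp

lemma bad_bound:
  assumes k: "k \<le> K"
  shows "real (card {f \<in> Om K. \<not> good k f}) \<le> (1/2)^(k div 2 + 3) * 2^(2^K)"
proof (cases "rr k = 0")
  case True
  then have "{f \<in> Om K. \<not> good k f} = {}" by (auto simp: good_def)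
  then show ?thesis by (simp only: card.empty) simp
next
  case False
  define r where "r = rr k"
  define t :: real where "t = 2^(k - r)"
  have tpos: "t > 0" by (simp add: t_def)
  define Tr where "Tr = (SIGMA l:{1..r}. words l) \<times> {..(2::nat)^r}"
  define Bd where "Bd x = (case x of ((l,u),j) \<Rightarrow>
     {f \<in> Om K. t \<le> \<bar>real (cnt f u k (cp k j)) - real (card (slots k l (cp k j))) / 2^l\<bar>})" for x
  have sub: "{f \<in> Om K. \<not> good k f} \<subseteq> (\<Union>x\<in>Tr. Bd x)"
  proof
    fix f assume "f \<in> {f \<in> Om K. \<not> good k f}"
    then obtain l u j where luj: "l \<in> {1..r}" "u \<in> words l" "j \<le> 2^r" "f \<in> Om K"
      "\<not> \<bar>real (cnt f u k (cp k j)) - real (card (slots k l (cp k j))) / 2^l\<bar> < 2^(k - r)"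
      unfolding good_def r_def by auto
    then have "f \<in> Bd ((l,u),j)" unfolding Bd_def t_def by simp
    moreover have "((l,u),j) \<in> Tr" using luj unfolding Tr_def by auto
    ultimately show "f \<in> (\<Union>x\<in>Tr. Bd x)" by blast
  qed
  have finTr: "finite Tr" unfolding Tr_def by (auto intro!: finite_SigmaI simp: finite_words)
  have each: "real (card (Bd x)) \<le> 2^k * 2^(2^K) / t^2" if "x \<in> Tr" for x
  proof -
    obtain l u j where x: "x = ((l,u),j)" "l \<in> {1..r}" "u \<in> words l" "j \<le> 2^r"
      using \<open>x \<in> Tr\<close> unfolding Tr_def by auto
    have c: "cp k j \<le> 2^(Suc k)" using cp_le x(4) unfolding r_def by simp
    have "real (card (Bd x)) * t^2 \<le> real (card (slots k l (cp k j))) * 2^(2^K)"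
      unfolding x(1) Bd_def using level_bound[OF k _ x(3) c tpos] x(2) by simp
    also have "\<dots> \<le> 2^k * 2^(2^K)"
      using card_slots_le[OF c, of l] x(2) by (simp del: power_Suc)
    finally show ?thesis using tpos by (simp add: field_simps)
  qed
  have cTr: "card Tr \<le> 2^(3*r+1)"
  proof -
    have "card (SIGMA l:{1..r}. words l) = (\<Sum>l\<in>{1..r}. 2^l)"
      by (simp add: card_SigmaI finite_words card_words)
    also have "\<dots> \<le> (\<Sum>l\<in>{1..r}. (2::nat)^r)" by (rule sum_mono) simp
    also have "\<dots> = r * 2^r" by simp
    also have "\<dots> \<le> 2^r * 2^r" using less_exp[of r] by simp
    finally have a: "card (SIGMA l:{1..r}. words l) \<le> 2^r * 2^r" .
    have b: "card {..(2::nat)^r} \<le> 2^(r+1)" by simp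
    have "card Tr = card (SIGMA l:{1..r}. words l) * card {..(2::nat)^r}"
      unfolding Tr_def by (simp add: card_cartesian_product)
    also have "\<dots> \<le> (2^r * 2^r) * 2^(r+1)" using a b by (rule mult_le_mono)
    also have "\<dots> = 2^(3*r+1)" by (simp flip: power_add)
    finally show ?thesis .
  qed
  have "real (card {f \<in> Om K. \<not> good k f}) \<le> real (card (\<Union>x\<in>Tr. Bd x))"
  proof -
    have "(\<Union>x\<in>Tr. Bd x) \<subseteq> Om K" unfolding Bd_def by auto
    then have "finite (\<Union>x\<in>Tr. Bd x)" by (rule finite_subset) (rule finite_Om)
    from card_mono[OF this sub] show ?thesis by (simp only: of_nat_le_iff)
  qed
  also have "\<dots> \<le> real (\<Sum>x\<in>Tr. card (Bd x))" using card_UN_le[OF finTr, of Bd] by linarith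
  also have "\<dots> \<le> (\<Sum>x\<in>Tr. 2^k * 2^(2^K) / t^2)" unfolding of_nat_sum by (rule sum_mono) (rule each)
  also have "\<dots> = real (card Tr) * (2^k * 2^(2^K) / t^2)" by (rule sum_constant)
  also have "\<dots> \<le> 2^(3*r+1) * (2^k * 2^(2^K) / t^2)"
  proof (rule mult_right_mono)
    have "real (card Tr) \<le> real ((2::nat)^(3*r+1))" using cTr by (simp only: of_nat_le_iff)
    then show "real (card Tr) \<le> 2^(3*r+1)" by simp
    show "0 \<le> 2^k * 2^(2^K) / t^2" using tpos by simp
  qed
  also have "\<dots> \<le> (1/2)^(k div 2 + 3) * 2^(2^K)"
  proof -
    have r1: "r \<ge> 1" using False unfolding r_def by simp
    have f1: "16 * (k div 16) \<le> k" "2 * (k div 2) \<le> k" by simp_all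
    have f2: "r + 8 = k div 16" using r1 unfolding r_def rr_def by simp
    have ar: "3*r+1 + k + (k div 2 + 3) \<le> 2 * (k - r)" using f1 f2 by linarith
    have "(2::real)^(3*r+1) * 2^k * 2^(k div 2 + 3) \<le> 2^(2*(k-r))"
    proof -
      have "(2::real)^(3*r+1) * 2^k * 2^(k div 2 + 3) = 2^(3*r+1 + k + (k div 2 + 3))" by (simp add: power_add)
      also have "\<dots> \<le> 2^(2*(k-r))" using ar by (intro power_increasing) auto
      finally show ?thesis .
    qed
    moreover have "t^2 = 2^(2*(k-r))" unfolding t_def by (simp add: power_mult[symmetric] mult.commute)
    ultimately show ?thesis using tpos
      by (simp add: field_simps power_one_over)
  qed
  finally show ?thesis .
qed

lemma geo_half: "(\<Sum>k<m. (1/2::real)^(k div 2)) \<le> 4"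
proof -
  have e: "(\<Sum>k<2*n. (1/2::real)^(k div 2)) = 4 - 4 * (1/2)^n" for n
  proof (induction n)
    case 0 then show ?case by simp
  next
    case (Suc n)
    have a: "2 * Suc n = Suc (Suc (2*n))" by simp
    have b: "(2*n) div 2 = n" "Suc (2*n) div 2 = n" by simp_all
    have "(\<Sum>k<2*Suc n. (1/2::real)^(k div 2)) = (\<Sum>k<2*n. (1/2::real)^(k div 2)) + (1/2)^n + (1/2)^n"
      unfolding a sum.lessThan_Suc b by simp
    then show ?case using Suc by simp
  qed
  have "(\<Sum>k<m. (1/2::real)^(k div 2)) \<le> (\<Sum>k<2*m. (1/2::real)^(k div 2))"
    by (rule sum_mono2) auto
  also have "\<dots> \<le> 4" unfolding e by simp
  finally show ?thesis .
qed

lemma exists_K: "\<exists>f\<in>Om K. \<forall>k\<le>K. good k f"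
proof (rule ccontr)
  assume "\<not> ?thesis"
  then have sub: "Om K \<subseteq> (\<Union>k\<in>{..K}. {f \<in> Om K. \<not> good k f})" by auto
  have "real (card (Om K)) \<le> real (card (\<Union>k\<in>{..K}. {f \<in> Om K. \<not> good k f}))"
  proof -
    have "finite (\<Union>k\<in>{..K}. {f \<in> Om K. \<not> good k f})" by (simp add: finite_Om)
    from card_mono[OF this sub] show ?thesis by (simp only: of_nat_le_iff)
  qed
  also have "\<dots> \<le> real (\<Sum>k\<in>{..K}. card {f \<in> Om K. \<not> good k f})"
    using card_UN_le[of "{..K}" "\<lambda>k. {f \<in> Om K. \<not> good k f}"] by (simp only: of_nat_le_iff) simp
  also have "\<dots> \<le> (\<Sum>k\<in>{..K}. (1/2)^(k div 2 + 3) * 2^(2^K))"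
    unfolding of_nat_sum by (rule sum_mono) (rule bad_bound, simp)
  also have "\<dots> = (1/8) * (\<Sum>k<Suc K. (1/2)^(k div 2)) * 2^(2^K)"
  proof -
    have "(\<Sum>k\<in>{..K}. (1/2::real)^(k div 2 + 3) * 2^(2^K)) = (\<Sum>k\<in>{..K}. ((1/8) * 2^(2^K)) * (1/2)^(k div 2))"
    proof (rule sum.cong[OF refl])
      fix k
      show "(1/2::real)^(k div 2 + 3) * 2^(2^K) = ((1/8) * 2^(2^K)) * (1/2)^(k div 2)"
        by (simp add: power_add field_simps)
    qed
    also have "\<dots> = ((1/8) * 2^(2^K)) * (\<Sum>k<Suc K. (1/2)^(k div 2))"
      by (simp add: sum_distrib_left lessThan_Suc_atMost)
    finally show ?thesis by simp
  qed
  also have "\<dots> \<le> (1/8) * 4 * 2^(2^K)"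
    using geo_half[of "Suc K"] by (intro mult_right_mono mult_left_mono) auto
  also have "\<dots> < real (card (Om K))" by (simp add: card_Om)
  finally show False by simp
qed

lemma good_cong:
  assumes "\<forall>i<2^k. b i = b' i"
  shows "good k b = good k b'"
proof -
  have "cnt b u k (cp k j) = cnt b' u k (cp k j)" if "l \<ge> 1" "length u = l" "j \<le> 2^(rr k)" for l u j
  proof -
    have c: "cp k j \<le> 2^Suc k" using cp_le that(3) by simp
    have "Ev b u i = Ev b' u i" if "i \<in> slots k l (cp k j)" for i
    proof -
      have "hh (i+q) < 2^k" if "q < l" for q
        using hh_lt[of k "i+q"] \<open>i \<in> slots k l (cp k j)\<close> c that unfolding slots_def by auto
      then show ?thesis using assms \<open>length u = l\<close> unfolding Ev_def by auto
    qed
    then show ?thesis unfolding cnt_def using that(2) by (metis (no_types, lifting) Collect_cong)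
  qed
  then have key: "(\<bar>real (cnt b u k (cp k j)) - real (card (slots k l (cp k j))) / 2^l\<bar> < 2^(k - rr k)) =
      (\<bar>real (cnt b' u k (cp k j)) - real (card (slots k l (cp k j))) / 2^l\<bar> < 2^(k - rr k))"
    if "l \<in> {1..rr k}" "u \<in> words l" "j \<le> 2^(rr k)" for l u j
    using that unfolding words_def by auto
  show ?thesis unfolding good_def using key by blast
qed

definition TT :: "nat \<Rightarrow> (nat \<Rightarrow> nat) set" where "TT K = {f \<in> Om K. \<forall>k\<le>K. good k f}"
definition Ext :: "nat \<Rightarrow> (nat \<Rightarrow> nat) \<Rightarrow> bool" where
  "Ext d f \<longleftrightarrow> (\<forall>K'. d \<le> 2^K' \<longrightarrow> (\<exists>g\<in>TT K'. \<forall>i<d. g i = f i))"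

lemma restrict_TT:
  assumes "g \<in> TT K''" "K \<le> K''"
  shows "restrict g {..<2^K} \<in> TT K"
proof -
  have le: "(2::nat)^K \<le> 2^K''" using assms(2) by simp
  have "restrict g {..<2^K} \<in> Om K"
    unfolding Om_def
  proof (rule PiE_I)
    fix x assume "x \<in> {..<(2::nat)^K}"
    then have "x \<in> {..<2^K''}" using le by (meson less_le_trans lessThan_iff)
    then show "restrict g {..<2^K} x \<in> {0,1}" using assms(1) \<open>x \<in> {..<2^K}\<close> unfolding TT_def Om_def by (auto simp: PiE_def Pi_def)
  qed simp
  moreover have "good k (restrict g {..<2^K})" if "k \<le> K" for k
  proof -
    have "good k g" using assms that unfolding TT_def by auto
    moreover have "(2::nat)^k \<le> 2^K" using that by simp
    ultimately show ?thesis using good_cong[of k g "restrict g {..<2^K}"] by auto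
  qed
  ultimately show ?thesis unfolding TT_def by auto
qed

lemma Ext_step:
  assumes E: "Ext d f" and d: "d \<le> 2^K"
  shows "\<exists>f'\<in>Om K. (\<forall>i<d. f' i = f i) \<and> Ext (2^K) f'"
proof (rule ccontr)
  assume neg: "\<not> ?thesis"
  define S where "S = {f'\<in>Om K. \<forall>i<d. f' i = f i}"
  have "\<forall>f'\<in>S. \<exists>K'. 2^K \<le> (2::nat)^K' \<and> \<not> (\<exists>g\<in>TT K'. \<forall>i<2^K. g i = f' i)"
  proof
    fix f' assume "f' \<in> S"
    then have "\<not> Ext (2^K) f'" using neg unfolding S_def by blast
    then show "\<exists>K'. 2^K \<le> (2::nat)^K' \<and> \<not> (\<exists>g\<in>TT K'. \<forall>i<2^K. g i = f' i)"
      unfolding Ext_def by blast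
  qed
  from bchoice[OF this] obtain M where M0: "\<forall>f'\<in>S. 2^K \<le> (2::nat)^(M f') \<and> \<not> (\<exists>g\<in>TT (M f'). \<forall>i<2^K. g i = f' i)"
    by blast
  have M: "2^K \<le> (2::nat)^(M f') \<and> \<not> (\<exists>g\<in>TT (M f'). \<forall>i<2^K. g i = f' i)"
    if "f' \<in> {f'\<in>Om K. \<forall>i<d. f' i = f i}" for f'
    using M0 that unfolding S_def by blast
  define Mx where "Mx = Max (insert K (M ` {f'\<in>Om K. \<forall>i<d. f' i = f i}))"
  have finM: "finite (insert K (M ` {f'\<in>Om K. \<forall>i<d. f' i = f i}))" by (simp add: finite_Om)
  have "K \<le> Mx" unfolding Mx_def using finM by simp
  then have "d \<le> 2^Mx" using d by (meson le_trans one_less_numeral_iff power_increasing_iff semiring_norm(76))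
  then obtain g where g: "g \<in> TT Mx" "\<forall>i<d. g i = f i" using E unfolding Ext_def by blast
  define f' where "f' = restrict g {..<2^K}"
  have f'T: "f' \<in> TT K" unfolding f'_def by (rule restrict_TT[OF g(1) \<open>K \<le> Mx\<close>])
  have f'in: "f' \<in> {f'\<in>Om K. \<forall>i<d. f' i = f i}"
    using f'T g(2) d unfolding TT_def f'_def by auto
  have MM: "M f' \<le> Mx" unfolding Mx_def using finM f'in by (intro Max_ge) auto
  have KM: "K \<le> M f'" using M[OF f'in] by simp
  have "restrict g {..<2^(M f')} \<in> TT (M f')" by (rule restrict_TT[OF g(1) MM])
  moreover have "\<forall>i<2^K. restrict g {..<2^(M f')} i = f' i"
  proof (intro allI impI)
    fix i :: nat assume "i < 2^K"
    moreover have "(2::nat)^K \<le> 2^(M f')" using KM by simp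
    ultimately have "i < 2^(M f')" by (rule less_le_trans)
    then show "restrict g {..<2^(M f')} i = f' i" using \<open>i < 2^K\<close> unfolding f'_def by simp
  qed
  ultimately show False using M[OF f'in] by blast
qed

lemma Ext_root: "Ext 0 f"
  unfolding Ext_def using exists_K unfolding TT_def by blast

primrec FF :: "nat \<Rightarrow> (nat \<Rightarrow> nat)" where
  "FF 0 = (SOME f'. f' \<in> Om 0 \<and> Ext (2^0) f')"
| "FF (Suc K) = (SOME f'. f' \<in> Om (Suc K) \<and> (\<forall>i<2^K. f' i = FF K i) \<and> Ext (2^Suc K) f')"

lemma FF_prop: "FF K \<in> Om K \<and> Ext (2^K) (FF K)"
proof (induction K)
  case 0
  have "\<exists>f'. f' \<in> Om 0 \<and> Ext (2^0) f'" using Ext_step[OF Ext_root[of undefined], of 0] by auto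
  then show ?case unfolding FF.simps by (rule someI_ex)
next
  case (Suc K)
  have "\<exists>f'. f' \<in> Om (Suc K) \<and> (\<forall>i<2^K. f' i = FF K i) \<and> Ext (2^Suc K) f'"
    using Ext_step[of "2^K" "FF K" "Suc K"] Suc.IH by auto
  from someI_ex[OF this] show ?case unfolding FF.simps by blast
qed

lemma FF_agree1: "\<forall>i<2^K. FF (Suc K) i = FF K i"
proof -
  have "\<exists>f'. f' \<in> Om (Suc K) \<and> (\<forall>i<2^K. f' i = FF K i) \<and> Ext (2^Suc K) f'"
    using Ext_step[of "2^K" "FF K" "Suc K"] FF_prop[of K] by auto
  from someI_ex[OF this] show ?thesis unfolding FF.simps by blast
qed

lemma FF_agree: "m \<le> n \<Longrightarrow> i < 2^m \<Longrightarrow> FF n i = FF m i"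
proof (induction n)
  case 0 then show ?case by simp
next
  case (Suc n)
  show ?case
  proof (cases "m = Suc n")
    case False
    then have "m \<le> n" using Suc.prems by simp
    moreover have "(2::nat)^m \<le> 2^n" using \<open>m \<le> n\<close> by simp
    moreover have "i < 2^n" using Suc.prems(2) \<open>(2::nat)^m \<le> 2^n\<close> by (rule less_le_trans)
    moreover have "FF (Suc n) i = FF n i" using FF_agree1[of n] \<open>i < 2^n\<close> by blast
    ultimately show ?thesis using Suc.IH Suc.prems by (simp del: FF.simps)
  qed simp
qed

definition bseq :: "nat \<Rightarrow> nat" where "bseq i = FF i i"

lemma bseq_agree: "i < 2^K \<Longrightarrow> bseq i = FF K i"
proof -
  assume i: "i < 2^K"
  have ii: "i < 2^i" by (rule less_exp)
  show ?thesis
  proof (cases "i \<le> K")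
    case True then show ?thesis using FF_agree[OF True ii] by (simp add: bseq_def)
  next
    case False then show ?thesis using FF_agree[of K i i] i by (simp add: bseq_def)
  qed
qed

lemma bseq_good: "good k bseq"
proof -
  have "Ext (2^k) (FF k)" using FF_prop by blast
  then obtain g where g: "g \<in> TT k" "\<forall>i<2^k. g i = FF k i" unfolding Ext_def by blast
  then have "good k g" unfolding TT_def by auto
  moreover have "\<forall>i<2^k. g i = bseq i" using g(2) bseq_agree by auto
  ultimately show ?thesis using good_cong[of k g bseq] by simp
qed

lemma bseq_01: "bseq i \<in> {0,1}"
proof -
  have "FF i \<in> Om i" using FF_prop by blast
  moreover have "i < 2^i" by (rule less_exp)
  ultimately show ?thesis unfolding bseq_def Om_def by (auto simp: PiE_def Pi_def)
qed

lemma mod_sep: "(i::nat) mod l = i' mod l \<Longrightarrow> i < i' \<Longrightarrow> i + l \<le> i'"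
proof -
  assume a: "i mod l = i' mod l" "i < i'"
  then have "l dvd i' - i" using mod_eq_dvd_iff_nat[of i i' l] by simp
  then obtain m where m: "i' - i = l * m" by (auto simp: dvd_def)
  then have "m \<ge> 1" using a(2) by (metis diff_is_0_eq less_one mult_0_right not_le)
  then have "l * m \<ge> l" by simp
  then show ?thesis using m a(2) by linarith
qed

lemma decomp:
  assumes "2^k \<le> c" and l1: "l \<ge> 1"
  shows "card {i. 1 \<le> i \<and> i + l \<le> c \<and> i mod l = 1 mod l \<and> P i}
     = card {i. 1 \<le> i \<and> i + l \<le> 2^k \<and> i mod l = 1 mod l \<and> P i}
     + card {i. 1 \<le> i \<and> i < 2^k \<and> 2^k < i + l \<and> i + l \<le> c \<and> i mod l = 1 mod l \<and> P i}
     + card {i \<in> slots k l c. P i}"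
proof -
  define X where "X = {i. 1 \<le> i \<and> i + l \<le> (2::nat)^k \<and> i mod l = 1 mod l \<and> P i}"
  define Y where "Y = {i. 1 \<le> i \<and> i < (2::nat)^k \<and> 2^k < i + l \<and> i + l \<le> c \<and> i mod l = 1 mod l \<and> P i}"
  define Z where "Z = {i \<in> slots k l c. P i}"
  have fX: "finite X" by (rule finite_subset[of _ "{..2^k}"]) (auto simp: X_def)
  have fY: "finite Y" by (rule finite_subset[of _ "{..c}"]) (auto simp: Y_def)
  have fZ: "finite Z" by (rule finite_subset[of _ "{..c}"]) (auto simp: Z_def slots_def)
  have one: "(1::nat) \<le> 2^k" by simp
  have one': "Suc 0 \<le> x" if "(2::nat)^k \<le> x" for x using one that by linarith
  have eq: "{i. 1 \<le> i \<and> i + l \<le> c \<and> i mod l = 1 mod l \<and> P i} = (X \<union> Y) \<union> Z"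
    using assms one unfolding X_def Y_def Z_def slots_def by (auto simp: not_le intro: one')
  have d1: "X \<inter> Y = {}" unfolding X_def Y_def by auto
  have d2: "(X \<union> Y) \<inter> Z = {}" using l1 unfolding X_def Y_def Z_def slots_def by auto
  have "card ((X \<union> Y) \<union> Z) = card X + card Y + card Z"
    using card_Un_disjoint[OF finite_UnI[OF fX fY] fZ d2] card_Un_disjoint[OF fX fY d1] by simp
  then show ?thesis unfolding eq unfolding X_def Y_def Z_def .
qed

lemma straddle:
  "card {i. 1 \<le> i \<and> i < (2::nat)^k \<and> 2^k < i + l \<and> i + l \<le> c \<and> i mod l = 1 mod l \<and> P i} \<le> 1"
proof -
  define Y where "Y = {i. 1 \<le> i \<and> i < (2::nat)^k \<and> 2^k < i + l \<and> i + l \<le> c \<and> i mod l = 1 mod l \<and> P i}"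
  have f: "finite Y" by (rule finite_subset[of _ "{..<(2::nat)^k}"]) (auto simp: Y_def)
  have "\<forall>a1\<in>Y. \<forall>a2\<in>Y. a1 = a2"
  proof (intro ballI)
    fix a1 a2 assume a1: "a1 \<in> Y" and a2: "a2 \<in> Y"
    have m: "a1 mod l = a2 mod l" using a1 a2 unfolding Y_def by simp
    have b1: "a1 < 2^k" "2^k < a1 + l" using a1 unfolding Y_def by simp_all
    have b2: "a2 < 2^k" "2^k < a2 + l" using a2 unfolding Y_def by simp_all
    show "a1 = a2"
    proof (rule ccontr)
      assume "a1 \<noteq> a2"
      then consider "a1 < a2" | "a2 < a1" by linarith
      then show False
      proof cases
        case 1 then have "a1 + l \<le> a2" using m by (rule mod_sep[rotated])
        then show False using b1 b2 by linarith
      next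
        case 2 then have "a2 + l \<le> a1" using m[symmetric] by (rule mod_sep[rotated])
        then show False using b1 b2 by linarith
      qed
    qed
  qed
  then have "card Y \<le> Suc 0" using card_le_Suc0_iff_eq[OF f] by blast
  then show ?thesis unfolding Y_def by simp
qed

lemma card_diff_interval:
  assumes "c' \<le> c"
  shows "card (slots k l c - slots k l c') \<le> c - c'"
proof -
  define D where "D = slots k l c - slots k l c'"
  have sub: "(\<lambda>i. i + l) ` D \<subseteq> {c'<..c}"
  proof
    fix y assume "y \<in> (\<lambda>i. i + l) ` D"
    then obtain i where i: "i \<in> D" "y = i + l" by blast
    then have "\<not> i + l \<le> c'" "i + l \<le> c"
      unfolding D_def slots_def by auto
    then show "y \<in> {c'<..c}" using i(2) by simp
  qed
  have inj: "inj_on (\<lambda>i. i + l) D" by (rule inj_onI) simp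
  have "card D = card ((\<lambda>i. i + l) ` D)" by (rule card_image[OF inj, symmetric])
  also have "\<dots> \<le> card {c'<..c}" by (rule card_mono[OF _ sub]) simp
  finally show ?thesis unfolding D_def by simp
qed

lemma within:
  assumes g: "good k b" and r: "l \<le> rr k" "1 \<le> l" and u: "u \<in> words l"
    and c: "2^k \<le> c" "c \<le> 2^(Suc k)"
  shows "\<bar>real (cnt b u k c) - real (card (slots k l c)) / 2^l\<bar> \<le> 2 * 2^(k - rr k)"
proof -
  define st :: nat where "st = 2^(k - rr k)"
  have stp: "st > 0" unfolding st_def by simp
  define j where "j = (c - 2^k) div st"
  have j1: "j * st \<le> c - 2^k" unfolding j_def by simp
  have j2: "c - 2^k < st + j * st" unfolding j_def using dividend_less_div_times[OF stp] by simp
  have kk: "(2::nat)^k = 2^(rr k) * st" unfolding st_def using rr_le[of k] by (simp flip: power_add)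
  have "c - 2^k \<le> 2^k" using c by simp
  then have "j * st \<le> 2^(rr k) * st" using j1 kk by linarith
  then have jle: "j \<le> 2^(rr k)" using stp mult_le_cancel2 by blast
  define c' where "c' = cp k j"
  have c'eq: "c' = 2^k + j * st" unfolding c'_def cp_def st_def by simp
  have cc': "c' \<le> c" "c - c' \<le> st" using j1 j2 c c'eq by linarith+
  have lu: "length u = l" using u by (simp add: words_def)
  have gj: "\<bar>real (cnt b u k c') - real (card (slots k l c')) / 2^l\<bar> < st"
  proof -
    have "l \<in> {1..rr k}" using r by simp
    then have "\<forall>u\<in>words l. \<forall>j\<le>2^(rr k).
     \<bar>real (cnt b u k (cp k j)) - real (card (slots k l (cp k j))) / 2^l\<bar> < 2^(k - rr k)"
      using g unfolding good_def by blast
    then show ?thesis using u jle unfolding c'_def st_def by simp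
  qed
  define X where "X = slots k l c"
  define X' where "X' = slots k l c'"
  have sub: "X' \<subseteq> X" using cc' unfolding X_def X'_def slots_def by auto
  have fX: "finite X" unfolding X_def by (rule finite_slots)
  have fX': "finite X'" unfolding X'_def by (rule finite_slots)
  have cX: "card X = card X' + card (X - X')"
    using card_Diff_subset[OF fX' sub] card_mono[OF fX sub] by simp
  have dle: "card (X - X') \<le> st" using card_diff_interval[OF cc'(1), of k l] cc'(2) unfolding X_def X'_def by simp
  define a where "a = card {i \<in> X - X'. Ev b u i}"
  have ale: "a \<le> card (X - X')" unfolding a_def by (rule card_mono) (use fX in auto)
  have ca: "cnt b u k c = cnt b u k c' + a"
  proof -
    have e: "{i \<in> X. Ev b u i} = {i \<in> X'. Ev b u i} \<union> {i \<in> X - X'. Ev b u i}" using sub by auto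
    have "card {i \<in> X. Ev b u i} = card {i \<in> X'. Ev b u i} + a"
      unfolding e a_def by (rule card_Un_disjoint) (use fX fX' in auto)
    then show ?thesis unfolding cnt_def lu X_def X'_def .
  qed
  have E1: "real (cnt b u k c) - real (card (slots k l c)) / 2^l
        = (real (cnt b u k c') - real (card (slots k l c')) / 2^l) + (real a - real (card (X - X')) / 2^l)"
    using ca cX unfolding X_def[symmetric] X'_def[symmetric] by (simp add: add_divide_distrib)
  have E2: "\<bar>real a - real (card (X - X')) / 2^l\<bar> \<le> real (card (X - X'))"
  proof -
    have h1: "(1::real) \<le> 2^l" by simp
    have "real (card (X - X')) * 1 \<le> real (card (X - X')) * 2^l" by (rule mult_left_mono[OF h1]) simp
    then have "real (card (X - X')) / 2^l \<le> real (card (X - X'))" by (simp add: divide_le_eq)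
    moreover have "real (card (X - X')) / 2^l \<ge> 0" by simp
    ultimately show ?thesis using ale by linarith
  qed
  have E3: "real (card (X - X')) \<le> real st" using dle by simp
  have "\<bar>real (cnt b u k c) - real (card (slots k l c)) / 2^l\<bar> \<le> real st + real st"
    unfolding E1 using gj E2 E3 by linarith
  then show ?thesis unfolding st_def by simp
qed

lemma S_formula:
  assumes l: "l \<ge> 1"
  shows "card {i. 1 \<le> i \<and> i + l \<le> Suc n \<and> i mod l = 1 mod l} = n div l"
proof -
  have "{i. 1 \<le> i \<and> i + l \<le> Suc n \<and> i mod l = 1 mod l} = (\<lambda>m. l * m + 1) ` {..<n div l}"
  proof (intro equalityI subsetI)
    fix i assume "i \<in> {i. 1 \<le> i \<and> i + l \<le> Suc n \<and> i mod l = 1 mod l}"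
    then have i: "1 \<le> i" "i + l \<le> Suc n" "i mod l = 1 mod l" by auto
    then have "l dvd i - 1" by (metis mod_eq_dvd_iff_nat)
    then obtain m where m: "i - 1 = l * m" by (auto simp: dvd_def)
    then have ieq: "i = l * m + 1" using i(1) by simp
    then have "(m + 1) * l \<le> n" using i(2) by (simp add: algebra_simps)
    then have "m + 1 \<le> n div l" using l by (simp add: less_eq_div_iff_mult_less_eq)
    then show "i \<in> (\<lambda>m. l * m + 1) ` {..<n div l}" using ieq by auto
  next
    fix i assume "i \<in> (\<lambda>m. l * m + 1) ` {..<n div l}"
    then obtain m where m: "m < n div l" "i = l * m + 1" by auto
    then have "m + 1 \<le> n div l" by simp
    then have "(m + 1) * l \<le> n" using less_eq_div_iff_mult_less_eq[of l "m+1" n] l by simp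
    moreover have "(l * m + 1) mod l = 1 mod l"
    proof -
      have "(1 + l * m) mod l = 1 mod l" by (rule mod_mult_self2)
      then show ?thesis by (simp add: add.commute)
    qed
    moreover have "i + l \<le> Suc n" using \<open>(m + 1) * l \<le> n\<close> m(2) by (simp add: algebra_simps)
    ultimately show "i \<in> {i. 1 \<le> i \<and> i + l \<le> Suc n \<and> i mod l = 1 mod l}" using m(2) by simp
  qed
  moreover have "inj_on (\<lambda>m. l * m + 1) {..<n div l}" using l by (intro inj_onI) simp
  ultimately show ?thesis by (simp add: card_image)
qed

definition AA :: "(nat \<Rightarrow> nat) \<Rightarrow> nat list \<Rightarrow> nat \<Rightarrow> nat" where
  "AA b u c = card {i. 1 \<le> i \<and> i + length u \<le> c \<and> i mod length u = 1 mod length u \<and> Ev b u i}"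
definition SS :: "nat \<Rightarrow> nat \<Rightarrow> nat" where
  "SS l c = card {i. 1 \<le> i \<and> i + l \<le> c \<and> i mod l = 1 mod l}"
definition Fd :: "(nat \<Rightarrow> nat) \<Rightarrow> nat list \<Rightarrow> nat \<Rightarrow> real" where
  "Fd b u c = real (AA b u c) - real (SS (length u) c) / 2^(length u)"

lemma level_step:
  assumes g: "good k b" and r: "l \<le> rr k" "1 \<le> l" and u: "u \<in> words l"
    and c: "2^k \<le> c" "c \<le> 2^(Suc k)"
  shows "\<bar>Fd b u c - Fd b u (2^k)\<bar> \<le> 2 * 2^(k - rr k) + 1"
proof -
  have lu: "length u = l" using u by (simp add: words_def)
  define stA where "stA = card {i. 1 \<le> i \<and> i < (2::nat)^k \<and> 2^k < i + l \<and> i + l \<le> c \<and> i mod l = 1 mod l \<and> Ev b u i}"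
  define stS where "stS = card {i. 1 \<le> i \<and> i < (2::nat)^k \<and> 2^k < i + l \<and> i + l \<le> c \<and> i mod l = 1 mod l \<and> True}"
  have A: "AA b u c = AA b u (2^k) + stA + cnt b u k c"
    unfolding AA_def cnt_def lu stA_def by (rule decomp[OF c(1) r(2)])
  have S0: "SS l c = SS l (2^k) + stS + card {i \<in> slots k l c. True}"
    unfolding SS_def stS_def using decomp[OF c(1) r(2), of "\<lambda>_. True"] by simp
  have S: "SS l c = SS l (2^k) + stS + card (slots k l c)" using S0 by simp
  have a1: "stA \<le> 1" unfolding stA_def by (rule straddle)
  have s1: "stS \<le> 1" unfolding stS_def by (rule straddle)
  have W: "\<bar>real (cnt b u k c) - real (card (slots k l c)) / 2^l\<bar> \<le> 2 * 2^(k - rr k)"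
    by (rule within[OF g r u c])
  have "Fd b u c - Fd b u (2^k) = (real (cnt b u k c) - real (card (slots k l c)) / 2^l) + (real stA - real stS / 2^l)"
    unfolding Fd_def lu A S by (simp add: add_divide_distrib)
  moreover have "\<bar>real stA - real stS / 2^l\<bar> \<le> 1"
  proof -
    have "real stS / 2^l \<le> 1" using s1 by (simp add: divide_le_eq order_trans[of _ 1])
    moreover have "real stS / 2^l \<ge> 0" by simp
    moreover have "real stA \<le> 1" using a1 by simp
    ultimately show ?thesis by linarith
  qed
  ultimately show ?thesis using W by linarith
qed

lemma main_lim:
  assumes G: "\<forall>k. good k b" and l: "l \<ge> 1" and u: "u \<in> words l"
  shows "(\<lambda>n. real (AA b u (Suc n)) / (real n / real l)) \<longlonglongrightarrow> 1/2^l"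
proof (rule LIMSEQ_I)
  fix e :: real assume e: "e > 0"
  have lu: "length u = l" using u by (simp add: words_def)
  define \<epsilon> where "\<epsilon> = e / (2 * real l)"
  have \<epsilon>p: "\<epsilon> > 0" unfolding \<epsilon>_def using e l by simp
  obtain R where R: "16/\<epsilon> < 2^R" using real_arch_pow[of 2 "16/\<epsilon>"] by auto
  define k1 where "k1 = 16 * (R + l + 8)"
  have rrk: "R + l \<le> rr k" if "k1 \<le> k" for k
  proof -
    have "k1 div 16 \<le> k div 16" using that by (rule div_le_mono)
    then show ?thesis unfolding rr_def k1_def by simp
  qed
  have step: "\<bar>Fd b u c - Fd b u (2^k)\<bar> \<le> \<epsilon>/4 * 2^k" if k: "k1 \<le> k" and c: "2^k \<le> c" "c \<le> 2^Suc k" for k c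
  proof -
    have r: "l \<le> rr k" using rrk[OF k] by simp
    have lev: "\<bar>Fd b u c - Fd b u (2^k)\<bar> \<le> 2 * 2^(k - rr k) + 1"
      by (rule level_step[OF spec[OF G] r l u c])
    define P :: real where "P = 2^(rr k)"
    define Q :: real where "Q = 2^(k - rr k)"
    have PQ: "P * Q = 2^k" unfolding P_def Q_def using rr_le[of k] by (simp flip: power_add)
    have "(2::real)^R \<le> 2^(rr k)" using rrk[OF k] by (intro power_increasing) auto
    then have P16: "16/\<epsilon> < P" using R unfolding P_def by (rule order.strict_trans2[rotated])
    then have "16 < \<epsilon> * P" using \<epsilon>p by (simp add: field_simps)
    moreover have Qp: "Q > 0" unfolding Q_def by simp
    ultimately have "16 * Q < \<epsilon> * P * Q" by simp
    then have a1: "16 * Q < \<epsilon> * 2^k" using PQ by (simp add: mult.assoc)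
    have "(2::real)^R \<le> 2^k" using k unfolding k1_def by (intro power_increasing) auto
    then have "16/\<epsilon> < 2^k" using R by (rule order.strict_trans2[rotated])
    then have a2: "16 < \<epsilon> * 2^k" using \<epsilon>p by (simp add: field_simps)
    have "2 * Q + 1 \<le> \<epsilon>/4 * 2^k" using a1 a2 by simp
    then show ?thesis using lev unfolding Q_def by simp
  qed
  define F0 where "F0 = \<bar>Fd b u (2^k1)\<bar>"
  have inv: "\<forall>c::nat. 2^k1 \<le> c \<and> c \<le> 2^(k1+d+1) \<longrightarrow> \<bar>Fd b u c\<bar> \<le> F0 + \<epsilon>/4 * 2^(k1+d+1)" for d
  proof (induction d)
    case 0
    show ?case
    proof (intro allI impI)
      fix c :: nat assume c: "2^k1 \<le> c \<and> c \<le> 2^(k1+0+1)"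
      have "\<bar>Fd b u c - Fd b u (2^k1)\<bar> \<le> \<epsilon>/4 * 2^k1" using step[of k1 c] c by simp
      moreover have "\<epsilon>/4 * 2^k1 \<le> \<epsilon>/4 * 2^(k1+0+1)" using \<epsilon>p by simp
      ultimately show "\<bar>Fd b u c\<bar> \<le> F0 + \<epsilon>/4 * 2^(k1+0+1)" unfolding F0_def by linarith
    qed
  next
    case (Suc d)
    show ?case
    proof (intro allI impI)
      fix c :: nat assume c: "2^k1 \<le> c \<and> c \<le> 2^(k1+Suc d+1)"
      have mono: "\<epsilon>/4 * 2^(k1+d+1) \<le> \<epsilon>/4 * 2^(k1+Suc d+1)" using \<epsilon>p by simp
      show "\<bar>Fd b u c\<bar> \<le> F0 + \<epsilon>/4 * 2^(k1+Suc d+1)"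
      proof (cases "c \<le> 2^(k1+d+1)")
        case True
        then show ?thesis using Suc.IH c mono by fastforce
      next
        case False
        define K where "K = k1 + d + 1"
        have c2: "2^K \<le> c" "c \<le> 2^Suc K" using False c unfolding K_def by simp_all
        have "\<bar>Fd b u c - Fd b u (2^K)\<bar> \<le> \<epsilon>/4 * 2^K" by (rule step) (use c2 in \<open>simp_all add: K_def\<close>)
        moreover have "\<bar>Fd b u (2^K)\<bar> \<le> F0 + \<epsilon>/4 * 2^K"
        proof -
          have "(2::nat)^k1 \<le> 2^K" unfolding K_def by (intro power_increasing) auto
          then show ?thesis using Suc.IH unfolding K_def by simp
        qed
        moreover have "\<epsilon>/4 * (2::real)^(k1 + Suc d + 1) = \<epsilon>/4 * 2^K + \<epsilon>/4 * 2^K" unfolding K_def by simp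
        moreover have "\<bar>Fd b u c\<bar> \<le> \<bar>Fd b u c - Fd b u (2^K)\<bar> + \<bar>Fd b u (2^K)\<bar>" by linarith
        ultimately show ?thesis by linarith
      qed
    qed
  qed
  have bound: "\<bar>Fd b u c\<bar> \<le> F0 + \<epsilon>/2 * c" if c: "2^k1 \<le> c" for c :: nat
  proof -
    have "c \<ge> 1" using c by (metis le_trans one_le_numeral one_le_power)
    then obtain K where K: "2^K \<le> c" "c < 2^(K+1)" using ex_power_ivl1[of 2 c] by auto
    have "k1 \<le> K"
    proof (rule ccontr)
      assume "\<not> k1 \<le> K"
      then have "(2::nat)^(K+1) \<le> 2^k1" by (intro power_increasing) auto
      then show False using K c by linarith
    qed
    then have "\<bar>Fd b u c\<bar> \<le> F0 + \<epsilon>/4 * 2^(k1+(K-k1)+1)" using inv[of "K - k1"] c K by simp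
    also have "\<dots> = F0 + \<epsilon>/2 * 2^K" using \<open>k1 \<le> K\<close> by simp
    also have "\<dots> \<le> F0 + \<epsilon>/2 * c"
    proof -
      have "real (2^K) \<le> real c" using K(1) by (simp only: of_nat_le_iff)
      then have "(2::real)^K \<le> real c" by simp
      then show ?thesis using \<epsilon>p by simp
    qed
    finally show ?thesis .
  qed
  have F0p: "F0 \<ge> 0" unfolding F0_def by simp
  define N where "N = max (2^k1) (nat \<lceil>2 * real l * (F0 + 1) / e\<rceil> + 1)"
  show "\<exists>no. \<forall>n\<ge>no. norm (real (AA b u (Suc n)) / (real n / real l) - 1/2^l) < e"
  proof (intro exI allI impI)
    fix n assume n: "N \<le> n"
    have n1: "2^k1 \<le> n" using n unfolding N_def by simp
    have n2: "2 * real l * (F0 + 1) / e < real n"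
    proof -
      have "nat \<lceil>2 * real l * (F0 + 1) / e\<rceil> + 1 \<le> n" using n unfolding N_def by simp
      then have "real (nat \<lceil>2 * real l * (F0 + 1) / e\<rceil>) + 1 \<le> real n" by linarith
      moreover have "2 * real l * (F0 + 1) / e \<le> real (nat \<lceil>2 * real l * (F0 + 1) / e\<rceil>)"
        by (meson le_nat_iff le_of_int_ceiling order.trans nat_le_iff order_refl real_nat_ceiling_ge)
      ultimately show ?thesis by linarith
    qed
    have npos: "real n > 0" using n1 by (metis gr0I le_0_eq of_nat_0_less_iff power_not_zero zero_neq_numeral)
    have lpos: "real l > 0" using l by simp
    define Fv where "Fv = Fd b u (Suc n)"
    define q where "q = n div l"
    have SSq: "SS l (Suc n) = q" unfolding SS_def q_def by (rule S_formula[OF l])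
    have AAe: "real (AA b u (Suc n)) = Fv + real q / 2^l" unfolding Fv_def Fd_def lu SSq by simp
    have qle: "real l * real q \<le> real n"
    proof -
      have "l * q \<le> n" unfolding q_def by simp
      then show ?thesis by (metis of_nat_le_iff of_nat_mult)
    qed
    have qge: "real n < real l + real l * real q"
    proof -
      have "n < l + q * l" unfolding q_def using dividend_less_div_times[of l n] l by simp
      then have "real n < real (l + q * l)" by (simp only: of_nat_less_iff)
      then show ?thesis by (simp add: algebra_simps)
    qed
    have Fvb: "\<bar>Fv\<bar> \<le> F0 + \<epsilon>/2 * real (Suc n)" unfolding Fv_def by (rule bound) (use n1 in simp)
    have X: "real (AA b u (Suc n)) / (real n / real l) - 1/2^l
        = real l * Fv / real n + (real l * real q - real n) / (2^l * real n)"
      unfolding AAe using npos lpos by (simp add: field_simps)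
    have t1: "\<bar>real l * Fv / real n\<bar> \<le> real l * (F0 + \<epsilon>/2 * real (Suc n)) / real n"
    proof -
      have "\<bar>real l * Fv / real n\<bar> = real l * \<bar>Fv\<bar> / real n" using npos lpos by (simp add: abs_mult)
      also have "\<dots> \<le> real l * (F0 + \<epsilon>/2 * real (Suc n)) / real n"
        using Fvb npos lpos by (intro divide_right_mono mult_left_mono) auto
      finally show ?thesis .
    qed
    have t2: "\<bar>(real l * real q - real n) / (2^l * real n)\<bar> \<le> real l / real n"
    proof -
      have "\<bar>real l * real q - real n\<bar> \<le> real l" using qle qge by linarith
      moreover have "(1::real) \<le> 2^l" by simp
      ultimately have "\<bar>real l * real q - real n\<bar> \<le> real l * 2^l" using lpos
        by (metis mult_left_mono mult.right_neutral less_imp_le order_trans)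
      then show ?thesis using npos by (simp add: abs_div field_simps)
    qed
    have t3: "real l * (F0 + \<epsilon>/2 * real (Suc n)) / real n \<le> real l * F0 / real n + e/2"
    proof -
      have "real l * \<epsilon> = e / 2" unfolding \<epsilon>_def using lpos by simp
      have h: "real l * (F0 + \<epsilon>/2 * real (Suc n)) / real n = real l * F0 / real n + (real l * \<epsilon>) / 2 * ((real n + 1) / real n)"
        using npos by (simp add: field_simps)
      have "real l * (F0 + \<epsilon>/2 * real (Suc n)) / real n = real l * F0 / real n + (e/4) * ((real n + 1) / real n)"
        unfolding h \<open>real l * \<epsilon> = e / 2\<close> by simp
      moreover have "(real n + 1) / real n \<le> 2"
      proof -
        have "n \<ge> 1" using npos by simp
        then have "real n \<ge> 1" by simp
        then show ?thesis using npos by (simp add: divide_le_eq)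
      qed
      moreover have "(e/4) * ((real n + 1) / real n) \<le> (e/4) * 2"
        using \<open>(real n + 1) / real n \<le> 2\<close> e by (intro mult_left_mono) auto
      ultimately show ?thesis by linarith
    qed
    have t4: "real l * F0 / real n + real l / real n < e / 2"
    proof -
      have "2 * real l * (F0 + 1) < e * real n" using n2 e by (simp add: divide_less_eq mult.commute)
      then show ?thesis using npos by (simp add: field_simps)
    qed
    have "norm (real (AA b u (Suc n)) / (real n / real l) - 1/2^l)
        \<le> \<bar>real l * Fv / real n\<bar> + \<bar>(real l * real q - real n) / (2^l * real n)\<bar>"
      unfolding real_norm_def X by (rule abs_triangle_ineq)
    then show "norm (real (AA b u (Suc n)) / (real n / real l) - 1/2^l) < e"
      using t1 t2 t3 t4 by linarith
  qed
qed

theorem theorem9: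
  shows "\<exists>x :: nat \<Rightarrow> nat. normal_word {0, 1} x \<and> x = even_word x"
proof -
  define x where "x = (\<lambda>j. bseq (hh (Suc j)))"
  have ev: "x = even_word x"
  proof
    fix k
    have "hh (Suc (2 * k + 1)) = hh (Suc k)" using hh_double[of "Suc k"] by simp
    then show "x k = even_word x k" unfolding x_def even_word_def by simp
  qed
  have rng: "range x \<subseteq> {0,1}"
  proof
    fix y assume "y \<in> range x"
    then obtain j where "y = x j" by blast
    then show "y \<in> {0,1}" unfolding x_def using bseq_01[of "hh (Suc j)"] by simp
  qed
  have ac: "aligned_count x n u = AA bseq u (Suc n)" if lu: "length u \<ge> 1" for n u
  proof -
    have fe: "factor x i (length u) = u \<longleftrightarrow> Ev bseq u i" if i: "1 \<le> i" for i
    proof -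
      have nth: "factor x i (length u) ! q = bseq (hh (i + q))" if "q < length u" for q
      proof -
        have "factor x i (length u) ! q = x (i + q - 1)" unfolding factor_def using that by simp
        also have "\<dots> = bseq (hh (i + q))" unfolding x_def using i by simp
        finally show ?thesis .
      qed
      have len: "length (factor x i (length u)) = length u" unfolding factor_def by simp
      show ?thesis unfolding Ev_def list_eq_iff_nth_eq using len nth by auto
    qed
    have "{i. 1 \<le> i \<and> i + length u - 1 \<le> n \<and> i mod length u = 1 mod length u \<and> factor x i (length u) = u}
        = {i. 1 \<le> i \<and> i + length u \<le> Suc n \<and> i mod length u = 1 mod length u \<and> Ev bseq u i}"
    proof (rule Collect_cong)
      fix i
      show "(1 \<le> i \<and> i + length u - 1 \<le> n \<and> i mod length u = 1 mod length u \<and> factor x i (length u) = u)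
          = (1 \<le> i \<and> i + length u \<le> Suc n \<and> i mod length u = 1 mod length u \<and> Ev bseq u i)"
      proof (cases "1 \<le> i")
        case True
        have "(i + length u - 1 \<le> n) = (i + length u \<le> Suc n)" using lu by linarith
        then show ?thesis using fe[OF True] True by simp
      qed simp
    qed
    then show ?thesis unfolding aligned_count_def AA_def by simp
  qed
  have "normal_word {0, 1} x"
    unfolding normal_word_def
  proof (intro conjI allI impI)
    show "range x \<subseteq> {0,1}" by (rule rng)
  next
    fix l :: nat and u :: "nat list"
    assume l: "1 \<le> l" and u: "length u = l \<and> set u \<subseteq> {0,1}"
    have uw: "u \<in> words l" using u unfolding words_def by simp
    have lim: "(\<lambda>n. real (AA bseq u (Suc n)) / (real n / real l)) \<longlonglongrightarrow> 1/2^l"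
      by (rule main_lim[OF _ l uw]) (simp add: bseq_good)
    have c2: "card {0, 1::nat} = 2" by simp
    show "(\<lambda>n. real (aligned_count x n u) / (real n / real l)) \<longlonglongrightarrow> 1 / real (card {0, 1::nat}) ^ l"
      unfolding c2 using lim ac u l by simp
  qed
  then show ?thesis using ev by blast
qed

end
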